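(* $W_{\max}(19,9)\in\{6,7,\dots,27\}$.
   Context: A weighing matrix of order $n$ and weight $k$ is an $n\times n$ matrix $W$ with entries in $\{1,-1,0\}$ such that $WW^T=kI_n$. Two weighing matrices $W_1,W_2$ of order $n$ and weight $k$ are unbiased if $\frac{1}{\sqrt{k}}W_1W_2^T$ is also a weighing matrix of order $n$ and weight $k$; a set is mutually unbiased if any two distinct members are unbiased. $W_{\max}(n,9)$ denotes the maximum size of a set of mutually unbiased weighing matrices of order $n$ and weight $9$. *)

theory Defs
  imports Complex_Main
begin

text \<open>An n x n real matrix is represented as a function nat => nat => real,
  required to vanish outside the index range {0..<n} x {0..<n}, so that
  distinct matrices correspond to distinct functions.\<close>

definition weighing_matrix :: "nat \<Rightarrow> nat \<Rightarrow> (nat \<Rightarrow> nat \<Rightarrow> real) \<Rightarrow> bool" where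
  "weighing_matrix n k W \<longleftrightarrow>
     (\<forall>i j. \<not> (i < n \<and> j < n) \<longrightarrow> W i j = 0) \<and>
     (\<forall>i<n. \<forall>j<n. W i j \<in> {1, -1, 0}) \<and>
     (\<forall>i<n. \<forall>j<n. (\<Sum>l<n. W i l * W j l) = (if i = j then real k else 0))"

definition scaled_prod :: "nat \<Rightarrow> nat \<Rightarrow> (nat \<Rightarrow> nat \<Rightarrow> real) \<Rightarrow> (nat \<Rightarrow> nat \<Rightarrow> real)
    \<Rightarrow> (nat \<Rightarrow> nat \<Rightarrow> real)" where
  "scaled_prod n k W1 W2 = (\<lambda>i j. if i < n \<and> j < n
       then (\<Sum>l<n. W1 i l * W2 j l) / sqrt (real k) else 0)"

definition unbiased :: "nat \<Rightarrow> nat \<Rightarrow> (nat \<Rightarrow> nat \<Rightarrow> real) \<Rightarrow> (nat \<Rightarrow> nat \<Rightarrow> real) \<Rightarrow> bool" where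
  "unbiased n k W1 W2 \<longleftrightarrow> weighing_matrix n k W1 \<and> weighing_matrix n k W2 \<and>
     weighing_matrix n k (scaled_prod n k W1 W2)"

definition mutually_unbiased :: "nat \<Rightarrow> nat \<Rightarrow> (nat \<Rightarrow> nat \<Rightarrow> real) set \<Rightarrow> bool" where
  "mutually_unbiased n k S \<longleftrightarrow> (\<forall>W\<in>S. weighing_matrix n k W) \<and>
     (\<forall>W1\<in>S. \<forall>W2\<in>S. W1 \<noteq> W2 \<longrightarrow> unbiased n k W1 W2)"

text \<open>Maximum size of a set of mutually unbiased weighing matrices.
  (There are only finitely many weighing matrices of a given order, so the
  set of sizes is finite and nonempty; Sup is its maximum.)\<close>
definition W_max :: "nat \<Rightarrow> nat \<Rightarrow> nat" where
  "W_max n k = Sup {card S | S. finite S \<and> mutually_unbiased n k S}"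

end

theory Submission
  imports Defs
begin


lemma sum4_swap:
  "(\<Sum>i\<in>I. \<Sum>j\<in>J. \<Sum>k\<in>K. \<Sum>l\<in>L. g i j k l) = (\<Sum>k\<in>K. \<Sum>l\<in>L. \<Sum>i\<in>I. \<Sum>j\<in>J. (g i j k l :: real))"
proof -
  have "(\<Sum>i\<in>I. \<Sum>j\<in>J. \<Sum>k\<in>K. \<Sum>l\<in>L. g i j k l) = (\<Sum>i\<in>I. \<Sum>k\<in>K. \<Sum>j\<in>J. \<Sum>l\<in>L. g i j k l)"
    by (rule sum.cong[OF refl], rule sum.swap)
  also have "\<dots> = (\<Sum>k\<in>K. \<Sum>i\<in>I. \<Sum>j\<in>J. \<Sum>l\<in>L. g i j k l)"
    by (rule sum.swap)
  also have "\<dots> = (\<Sum>k\<in>K. \<Sum>i\<in>I. \<Sum>l\<in>L. \<Sum>j\<in>J. g i j k l)"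
    by (rule sum.cong[OF refl], rule sum.cong[OF refl], rule sum.swap)
  also have "\<dots> = (\<Sum>k\<in>K. \<Sum>l\<in>L. \<Sum>i\<in>I. \<Sum>j\<in>J. g i j k l)"
    by (rule sum.cong[OF refl], rule sum.swap)
  finally show ?thesis .
qed

lemma sum_sq_swap:
  fixes f :: "'i \<Rightarrow> 'k \<Rightarrow> real"
  shows "(\<Sum>i\<in>I. \<Sum>j\<in>I. (\<Sum>k\<in>K. f i k * f j k)^2) = (\<Sum>k\<in>K. \<Sum>l\<in>K. (\<Sum>i\<in>I. f i k * f i l)^2)"
proof -
  have "(\<Sum>i\<in>I. \<Sum>j\<in>I. (\<Sum>k\<in>K. f i k * f j k)^2) = (\<Sum>i\<in>I. \<Sum>j\<in>I. \<Sum>k\<in>K. \<Sum>l\<in>K. (f i k * f i l) * (f j k * f j l))"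
    by (simp add: power2_eq_square sum_product mult_ac)
  also have "\<dots> = (\<Sum>k\<in>K. \<Sum>l\<in>K. \<Sum>i\<in>I. \<Sum>j\<in>I. (f i k * f i l) * (f j k * f j l))"
    by (rule sum4_swap)
  also have "\<dots> = (\<Sum>k\<in>K. \<Sum>l\<in>K. (\<Sum>i\<in>I. f i k * f i l)^2)"
    by (simp add: power2_eq_square sum_product)
  finally show ?thesis .
qed



lemma sum_sq_expand:
  fixes f :: "'a \<Rightarrow> real"
  assumes "finite A"
  shows "(\<Sum>a\<in>A. (f a - c)^2) = (\<Sum>a\<in>A. (f a)^2) - 2 * c * (\<Sum>a\<in>A. f a) + real (card A) * c^2"
proof -
  have "(\<Sum>a\<in>A. 2 * f a * c) = 2 * c * (\<Sum>a\<in>A. f a)"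
    by (simp add: sum_distrib_left sum_distrib_right mult_ac)
  then show ?thesis
    by (simp add: power2_diff sum.distrib sum_subtractf assms)
qed

lemma four_sum_lower:
  fixes T :: "nat \<Rightarrow> nat \<Rightarrow> nat \<Rightarrow> nat \<Rightarrow> real"
  assumes symm1: "\<And>a b. T a b a b = T a a b b" and symm2: "\<And>a b. T a b b a = T a a b b"
  shows "(\<Sum>a<n. \<Sum>b<n. \<Sum>c<n. \<Sum>e<n. (T a b c e)^2) \<ge>
     3 * (\<Sum>a<n. \<Sum>b<n. (T a a b b)^2) - 2 * (\<Sum>a<n. (T a a a a)^2)"
proof -
  have pw: "(\<Sum>c<n. \<Sum>e<n. (T a b c e)^2) \<ge> (if a = b then (\<Sum>c<n. (T a a c c)^2) else 2 * (T a a b b)^2)"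
    if ab: "a < n" "b < n" for a b
  proof (cases "a = b")
    case True
    have "(\<Sum>c<n. (T a a c c)^2) \<le> (\<Sum>c<n. \<Sum>e<n. (T a a c e)^2)"
    proof (rule sum_mono)
      fix c assume "c \<in> {..<n}"
      then show "(T a a c c)^2 \<le> (\<Sum>e<n. (T a a c e)^2)"
        by (intro member_le_sum[where f="\<lambda>e. (T a a c e)^2"]) auto
    qed
    then show ?thesis using True by simp
  next
    case False
    have "(\<Sum>c<n. (if c = a then (T a b a b)^2 else 0) + (if c = b then (T a b b a)^2 else 0)) \<le> (\<Sum>c<n. \<Sum>e<n. (T a b c e)^2)"
    proof (rule sum_mono)
      fix c assume c: "c \<in> {..<n}"
      show "(if c = a then (T a b a b)^2 else 0) + (if c = b then (T a b b a)^2 else 0) \<le> (\<Sum>e<n. (T a b c e)^2)"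
      proof (cases "c = a")
        case True
        then show ?thesis using False ab by (auto intro!: member_le_sum[where f="\<lambda>e. (T a b a e)^2"])
      next
        case ca: False
        show ?thesis
        proof (cases "c = b")
          case True
          then show ?thesis using ca ab by (auto intro!: member_le_sum[where f="\<lambda>e. (T a b b e)^2"])
        next
          case False
          then show ?thesis using ca by (auto intro!: sum_nonneg)
        qed
      qed
    qed
    moreover have "(\<Sum>c<n. (if c = a then (T a b a b)^2 else 0) + (if c = b then (T a b b a)^2 else 0)) = 2 * (T a a b b)^2"
      using ab by (simp add: sum.distrib symm1 symm2)
    ultimately show ?thesis using False by simp
  qed
  have "(\<Sum>a<n. \<Sum>b<n. (if a = b then (\<Sum>c<n. (T a a c c)^2) else 2 * (T a a b b)^2)) \<le> (\<Sum>a<n. \<Sum>b<n. \<Sum>c<n. \<Sum>e<n. (T a b c e)^2)"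
    by (intro sum_mono pw) auto
  moreover have "(\<Sum>a<n. \<Sum>b<n. (if a = b then (\<Sum>c<n. (T a a c c)^2) else 2 * (T a a b b)^2))
      = (\<Sum>a<n. (\<Sum>c<n. (T a a c c)^2) + 2 * (\<Sum>b<n. (T a a b b)^2) - 2 * (T a a a a)^2)"
  proof (rule sum.cong[OF refl])
    fix a assume a: "a \<in> {..<n}"
    have "(\<Sum>b<n. (if a = b then (\<Sum>c<n. (T a a c c)^2) else 2 * (T a a b b)^2))
        = (\<Sum>b<n. 2 * (T a a b b)^2 + (if a = b then (\<Sum>c<n. (T a a c c)^2) - 2 * (T a a b b)^2 else 0))"
      by (rule sum.cong) auto
    also have "\<dots> = 2 * (\<Sum>b<n. (T a a b b)^2) + ((\<Sum>c<n. (T a a c c)^2) - 2 * (T a a a a)^2)"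
      using a by (simp add: sum.distrib sum_distrib_left)
    finally show "(\<Sum>b<n. (if a = b then (\<Sum>c<n. (T a a c c)^2) else 2 * (T a a b b)^2))
      = (\<Sum>c<n. (T a a c c)^2) + 2 * (\<Sum>b<n. (T a a b b)^2) - 2 * (T a a a a)^2" by simp
  qed
  moreover have "(\<Sum>a<n. (\<Sum>c<n. (T a a c c)^2) + 2 * (\<Sum>b<n. (T a a b b)^2) - 2 * (T a a a a)^2)
     = 3 * (\<Sum>a<n. \<Sum>b<n. (T a a b b)^2) - 2 * (\<Sum>a<n. (T a a a a)^2)"
  proof -
    have "(\<Sum>a<n. \<Sum>b<n. 2 * (T a a b b)^2) = 2 * (\<Sum>a<n. \<Sum>b<n. (T a a b b)^2)"
      by (simp add: sum_distrib_left)
    then show ?thesis by (simp add: sum.distrib sum_subtractf sum_distrib_left[symmetric])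
  qed
  ultimately show ?thesis by linarith
qed



lemma prodsum: "(\<Sum>p\<in>A\<times>B. g p) = (\<Sum>a\<in>A. \<Sum>b\<in>B. (g (a,b) :: real))"
  by (simp add: sum.cartesian_product)

lemma upper_core:
  fixes x :: "'i \<Rightarrow> nat \<Rightarrow> real" and I :: "'i set" and M :: real
  assumes fin: "finite I"
  and ent: "\<forall>i\<in>I. \<forall>a<19. x i a = 0 \<or> x i a = 1 \<or> x i a = -1"
  and nrm: "\<forall>i\<in>I. (\<Sum>a<19. (x i a)^2) = 9"
  and H3: "\<forall>i\<in>I. (\<Sum>j\<in>I. (\<Sum>a<19. x i a * x j a)^4) = 729 * (M + 8)"
  and NM: "real (card I) = 19 * M" and pos: "card I > 0"
  shows "M \<le> 27"
proof -
  define N where "N = real (card I)"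
  define T where "T a b c e = (\<Sum>i\<in>I. x i a * x i b * (x i c * x i e))" for a b c e
  define F where "F i p = x i (fst p) * x i (snd p)" for i p
  have x4: "(x i a)^4 = (x i a)^2" if "i \<in> I" "a < 19" for i a
  proof -
    have "x i a = 0 \<or> x i a = 1 \<or> x i a = -1" using ent that by auto
    then show ?thesis by (elim disjE) simp_all
  qed
  have LHS: "(\<Sum>i\<in>I. \<Sum>j\<in>I. (\<Sum>a<19. x i a * x j a)^4) = N * (729 * (M + 8))"
    using H3 by (simp add: N_def)
  have sq: "(\<Sum>a<19. x i a * x j a)^2 = (\<Sum>p\<in>{..<19::nat}\<times>{..<19}. F i p * F j p)" for i j
    by (simp add: power2_eq_square sum_product sum.cartesian_product F_def mult_ac case_prod_unfold)
  have "(\<Sum>i\<in>I. \<Sum>j\<in>I. (\<Sum>a<19. x i a * x j a)^4) = (\<Sum>i\<in>I. \<Sum>j\<in>I. ((\<Sum>a<19. x i a * x j a)^2)^2)"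
    by (simp add: power_mult[symmetric])
  also have "\<dots> = (\<Sum>i\<in>I. \<Sum>j\<in>I. (\<Sum>p\<in>{..<19::nat}\<times>{..<19}. F i p * F j p)^2)"
    by (simp add: sq)
  also have "\<dots> = (\<Sum>p\<in>{..<19::nat}\<times>{..<19}. \<Sum>q\<in>{..<19::nat}\<times>{..<19}. (\<Sum>i\<in>I. F i p * F i q)^2)"
    by (rule sum_sq_swap)
  also have "\<dots> = (\<Sum>a<19. \<Sum>b<19. \<Sum>c<19. \<Sum>e<19. (T a b c e)^2)"
    by (simp only: prodsum) (simp add: F_def T_def mult_ac)
  finally have eq1: "(\<Sum>a<19. \<Sum>b<19. \<Sum>c<19. \<Sum>e<19. (T a b c e)^2) = N * (729 * (M + 8))"
    using LHS by simp
  have low: "(\<Sum>a<19. \<Sum>b<19. \<Sum>c<19. \<Sum>e<19. (T a b c e)^2) \<ge>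
     3 * (\<Sum>a<19. \<Sum>b<19. (T a a b b)^2) - 2 * (\<Sum>a<19. (T a a a a)^2)"
    by (rule four_sum_lower) (simp_all add: T_def mult_ac)
  have sD: "(\<Sum>a<19. T a a a a) = 9 * N"
  proof -
    have "(\<Sum>a<19. T a a a a) = (\<Sum>i\<in>I. \<Sum>a<19. (x i a)^4)"
      unfolding T_def by (subst sum.swap) (simp add: power4_eq_xxxx mult_ac)
    also have "\<dots> = (\<Sum>i\<in>I. \<Sum>a<19. (x i a)^2)"
      by (intro sum.cong refl) (simp add: x4)
    also have "\<dots> = 9 * N" using nrm by (simp add: N_def)
    finally show ?thesis .
  qed
  have sF: "(\<Sum>a<19. \<Sum>b<19. T a a b b) = 81 * N"
  proof -
    have "(\<Sum>a<19. \<Sum>b<19. T a a b b) = (\<Sum>i\<in>I. (\<Sum>a<19. (x i a)^2) * (\<Sum>b<19. (x i b)^2))"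
      unfolding T_def
      by (simp add: sum_product power2_eq_square sum.swap[of _ I] mult_ac)
    also have "\<dots> = 81 * N" using nrm by (simp add: N_def)
    finally show ?thesis .
  qed
  define D where "D = (\<Sum>a<19. (T a a a a)^2)"
  define FF where "FF = (\<Sum>a<19. \<Sum>b<19. (T a a b b)^2)"
  define nu where "nu = 9 * N / 19"
  define mu where "mu = 4 * N / 19"
  have c1: "(\<Sum>a<19::nat. (T a a a a - nu)^2) = D - 2 * nu * (9 * N) + 19 * nu^2"
    using sum_sq_expand[of "{..<19::nat}" "\<lambda>a. T a a a a" nu] sD by (simp add: D_def)
  have c2: "(\<Sum>a<19::nat. \<Sum>b<19. (T a a b b - mu)^2) = FF - 2 * mu * (81 * N) + 361 * mu^2"
  proof -
    have "(\<Sum>a<19::nat. \<Sum>b<19. (T a a b b - mu)^2) = (\<Sum>a<19::nat. (\<Sum>b<19. (T a a b b)^2) - 2 * mu * (\<Sum>b<19. T a a b b) + 19 * mu^2)"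
      by (intro sum.cong refl) (simp add: sum_sq_expand)
    also have "\<dots> = FF - 2 * mu * (\<Sum>a<19. \<Sum>b<19. T a a b b) + 361 * mu^2"
      by (simp add: FF_def sum.distrib sum_subtractf sum_distrib_left)
    finally show ?thesis using sF by simp
  qed
  have c3: "(\<Sum>a<19::nat. (T a a a a - mu)^2) = D - 2 * mu * (9 * N) + 19 * mu^2"
    using sum_sq_expand[of "{..<19::nat}" "\<lambda>a. T a a a a" mu] sD by (simp add: D_def)
  have offd: "(\<Sum>a<19::nat. \<Sum>b<19. (T a a b b - mu)^2) - (\<Sum>a<19::nat. (T a a a a - mu)^2) \<ge> 0"
  proof -
    have "(\<Sum>a<19::nat. (T a a a a - mu)^2) \<le> (\<Sum>a<19::nat. \<Sum>b<19. (T a a b b - mu)^2)"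
      by (intro sum_mono member_le_sum[where f="\<lambda>b. (T _ _ b b - mu)^2"]) auto
    then show ?thesis by simp
  qed
  have nn: "(\<Sum>a<19::nat. (T a a a a - nu)^2) \<ge> 0" by (intro sum_nonneg) auto
  have key: "3 * FF - 2 * D \<ge> 945 * N^2 / 19"
    using c1 c2 c3 offd nn unfolding nu_def mu_def by (simp add: power2_eq_square field_simps) 
  have "N * (729 * (M + 8)) \<ge> 945 * N^2 / 19"
    using eq1 low key unfolding D_def FF_def by linarith
  moreover have "N = 19 * M" using NM N_def by simp
  moreover have "N > 0" using pos N_def by simp
  ultimately have "19 * M * (729 * (M + 8)) \<ge> 945 * (19 * M)^2 / 19" by simp
  then have "M * (729 * (M + 8)) \<ge> M * (945 * M)" by (simp add: power2_eq_square field_simps)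
  moreover have "M > 0" using \<open>N = 19 * M\<close> \<open>N > 0\<close> by simp
  ultimately have "729 * (M + 8) \<ge> 945 * M" by (simp add: mult_le_cancel_left)
  then show ?thesis by simp
qed



lemma sqrt9: "sqrt (real (9::nat)) = 3"
  by (rule real_sqrt_unique) auto

lemma self_term:
  assumes "weighing_matrix 19 9 W" "r < 19"
  shows "(\<Sum>s<19. (\<Sum>a<19. W r a * W s a)^4) = 6561"
proof -
  have "(\<Sum>s<19. (\<Sum>a<19. W r a * W s a)^4) = (\<Sum>s<(19::nat). (if r = s then 9 else 0)^4)"
    using assms unfolding weighing_matrix_def by (intro sum.cong refl) auto
  also have "\<dots> = (\<Sum>s<(19::nat). if r = s then 6561 else 0)"
    by (intro sum.cong refl) auto
  also have "\<dots> = 6561" using assms(2) by simp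
  finally show ?thesis .
qed

lemma cross_term:
  assumes "unbiased 19 9 W W'" "r < 19"
  shows "(\<Sum>s<19. (\<Sum>a<19. W r a * W' s a)^4) = 729"
proof -
  have wsp: "weighing_matrix 19 9 (scaled_prod 19 9 W W')" using assms unfolding unbiased_def by simp
  define g where "g s = (\<Sum>a<19. W r a * W' s a)" for s
  have sp: "scaled_prod 19 9 W W' r s = g s / 3" if "s < 19" for s
    using that assms(2) by (simp add: scaled_prod_def g_def sqrt9)
  have g4: "(g s)^4 = 9 * (g s)^2" if "s < 19" for s
  proof -
    have "g s / 3 \<in> {1, -1, 0}" using wsp that assms(2) sp unfolding weighing_matrix_def by metis
    then have "g s = 3 \<or> g s = -3 \<or> g s = 0" by auto
    then show ?thesis by (elim disjE) simp_all
  qed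
  have "(\<Sum>s<19. scaled_prod 19 9 W W' r s * scaled_prod 19 9 W W' r s) = 9"
    using wsp assms(2) unfolding weighing_matrix_def by simp
  then have "(\<Sum>s<19. (g s / 3) * (g s / 3)) = 9" by (simp add: sp)
  then have "(\<Sum>s<19. (g s)^2) / 9 = 9" by (simp add: sum_divide_distrib power2_eq_square)
  then have g2: "(\<Sum>s<19. (g s)^2) = 81" by simp
  have "(\<Sum>s<19. (g s)^4) = (\<Sum>s<19. 9 * (g s)^2)" by (intro sum.cong refl) (simp add: g4)
  also have "\<dots> = 729" by (simp add: sum_distrib_left[symmetric] g2)
  finally show ?thesis by (simp add: g_def)
qed

lemma card_le_27:
  assumes fin: "finite S" and mu: "mutually_unbiased 19 9 S"
  shows "card S \<le> 27"
proof (cases "card S = 0")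
  case True then show ?thesis by simp
next
  case False
  define I where "I = S \<times> {..<(19::nat)}"
  define x where "x i a = fst i (snd i) a" for i :: "(nat \<Rightarrow> nat \<Rightarrow> real) \<times> nat" and a
  have wm: "weighing_matrix 19 9 W" if "W \<in> S" for W using mu that unfolding mutually_unbiased_def by auto
  have finI: "finite I" using fin by (simp add: I_def)
  have cardI: "card I = 19 * card S" by (simp add: I_def card_cartesian_product)
  have ent: "\<forall>i\<in>I. \<forall>a<19. x i a = 0 \<or> x i a = 1 \<or> x i a = -1"
  proof (intro ballI allI impI)
    fix i a assume i: "i \<in> I" and a: "a < (19::nat)"
    obtain W r where "i = (W, r)" "W \<in> S" "r < 19" using i by (auto simp: I_def)
    then show "x i a = 0 \<or> x i a = 1 \<or> x i a = -1"
      using wm[of W] a unfolding weighing_matrix_def x_def by auto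
  qed
  have nrm: "\<forall>i\<in>I. (\<Sum>a<19. (x i a)^2) = 9"
  proof
    fix i assume i: "i \<in> I"
    obtain W r where "i = (W, r)" "W \<in> S" "r < 19" using i by (auto simp: I_def)
    then show "(\<Sum>a<19. (x i a)^2) = 9"
      using wm[of W] unfolding weighing_matrix_def x_def by (simp add: power2_eq_square)
  qed
  have H3: "\<forall>i\<in>I. (\<Sum>j\<in>I. (\<Sum>a<19. x i a * x j a)^4) = 729 * (real (card S) + 8)"
  proof
    fix i assume i: "i \<in> I"
    obtain W r where wr: "i = (W, r)" "W \<in> S" "r < 19" using i by (auto simp: I_def)
    define h where "h (W'::nat \<Rightarrow> nat \<Rightarrow> real) = (\<Sum>s<19. (\<Sum>a<19. W r a * W' s a)^4)" for W'
    have "(\<Sum>j\<in>I. (\<Sum>a<19. x i a * x j a)^4) = (\<Sum>W'\<in>S. h W')"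
      unfolding I_def h_def by (simp only: prodsum) (simp add: x_def wr)
    also have "\<dots> = h W + (\<Sum>W'\<in>S - {W}. h W')"
      using fin wr(2) by (simp add: sum.remove)
    also have "(\<Sum>W'\<in>S - {W}. h W') = (\<Sum>W'\<in>S - {W}. 729)"
    proof (intro sum.cong refl)
      fix W' assume "W' \<in> S - {W}"
      then have "unbiased 19 9 W W'" using mu wr(2) unfolding mutually_unbiased_def by auto
      then show "h W' = 729" unfolding h_def using cross_term wr(3) by blast
    qed
    also have "h W = 6561" unfolding h_def using self_term wm[OF wr(2)] wr(3) by blast
    finally have "(\<Sum>j\<in>I. (\<Sum>a<19. x i a * x j a)^4) = 6561 + 729 * real (card (S - {W}))" by simp
    moreover have "card (S - {W}) = card S - 1" using wr(2) fin by simp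
    ultimately show "(\<Sum>j\<in>I. (\<Sum>a<19. x i a * x j a)^4) = 729 * (real (card S) + 8)"
      using False by (simp add: of_nat_diff algebra_simps)
  qed
  have "real (card S) \<le> 27"
    by (rule upper_core[OF finI ent nrm H3]) (use cardI False in auto)
  then show ?thesis by simp
qed



fun dotl :: "int list \<Rightarrow> int list \<Rightarrow> int" where
  "dotl (x # xs) (y # ys) = x * y + dotl xs ys"
| "dotl _ _ = 0"

lemma dotl_sum:
  "length xs = length ys \<Longrightarrow> (\<Sum>l<length xs. (of_int (xs ! l) :: real) * of_int (ys ! l)) = of_int (dotl xs ys)"
proof (induction xs arbitrary: ys)
  case Nil then show ?case by simp
next
  case (Cons x xs)
  then obtain y ys' where ys: "ys = y # ys'" by (cases ys) auto
  with Cons show ?case by (simp add: sum.lessThan_Suc_shift del: sum.lessThan_Suc)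
qed

definition toW :: "int list list \<Rightarrow> nat \<Rightarrow> nat \<Rightarrow> real" where
  "toW M i j = (if i < 19 \<and> j < 19 then of_int (M ! i ! j) else 0)"

definition colm :: "int list list \<Rightarrow> nat \<Rightarrow> int list" where
  "colm M i = map (\<lambda>r. r ! i) M"

definition wf :: "int list list \<Rightarrow> bool" where
  "wf M \<longleftrightarrow> length M = 19 \<and> list_all (\<lambda>r. length r = 19) M"

definition entries_ok :: "int list list \<Rightarrow> bool" where
  "entries_ok M \<longleftrightarrow> list_all (list_all (\<lambda>x. x = 0 \<or> x = 1 \<or> x = -1)) M"

definition gram :: "int list list \<Rightarrow> int list list" where
  "gram M = map (\<lambda>r. map (dotl r) M) M"

definition cgram :: "int list list \<Rightarrow> int list list" where
  "cgram M = map (\<lambda>i. map (\<lambda>j. dotl (colm M i) (colm M j)) [0..<19]) [0..<19]"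

definition idm :: "int list list" where
  "idm = map (\<lambda>i. map (\<lambda>j. if i = j then 9 else 0) [0..<19]) [0..<19]"

definition cross_ok :: "int list list \<Rightarrow> int list list \<Rightarrow> bool" where
  "cross_ok M N \<longleftrightarrow> list_all (\<lambda>r. list_all (\<lambda>s. dotl r s = 0 \<or> dotl r s = 3 \<or> dotl r s = -3) N) M"

definition good :: "int list list \<Rightarrow> bool" where
  "good M \<longleftrightarrow> wf M \<and> entries_ok M \<and> gram M = idm \<and> cgram M = idm"

lemma row_len: "wf M \<Longrightarrow> i < 19 \<Longrightarrow> length (M ! i) = 19"
  unfolding wf_def by (auto simp: list_all_length)

lemma toW_dot:
  assumes "wf M" "wf N" "i < 19" "j < 19"
  shows "(\<Sum>l<19. toW M i l * toW N j l) = of_int (dotl (M ! i) (N ! j))"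
proof -
  have "(\<Sum>l<19. toW M i l * toW N j l) = (\<Sum>l<length (M ! i). (of_int (M ! i ! l) :: real) * of_int (N ! j ! l))"
    using assms row_len[OF assms(1,3)] by (simp add: toW_def)
  also have "\<dots> = of_int (dotl (M ! i) (N ! j))"
    by (rule dotl_sum) (simp add: row_len assms)
  finally show ?thesis .
qed

lemma toW_coldot:
  assumes "wf M" "i < 19" "j < 19"
  shows "(\<Sum>l<19. toW M l i * toW M l j) = of_int (dotl (colm M i) (colm M j))"
proof -
  have lM: "length M = 19" using assms(1) by (simp add: wf_def)
  have "(\<Sum>l<19. toW M l i * toW M l j) = (\<Sum>l<length (colm M i). (of_int (colm M i ! l) :: real) * of_int (colm M j ! l))"
    using assms lM by (simp add: toW_def colm_def)
  also have "\<dots> = of_int (dotl (colm M i) (colm M j))"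
    by (rule dotl_sum) (simp add: colm_def)
  finally show ?thesis .
qed

lemma idm_nth: "i < 19 \<Longrightarrow> j < 19 \<Longrightarrow> idm ! i ! j = (if i = j then 9 else 0)"
  by (simp add: idm_def)

lemma gram_nth: "wf M \<Longrightarrow> i < 19 \<Longrightarrow> j < 19 \<Longrightarrow> gram M ! i ! j = dotl (M ! i) (M ! j)"
  by (simp add: gram_def wf_def)

lemma cgram_nth: "i < 19 \<Longrightarrow> j < 19 \<Longrightarrow> cgram M ! i ! j = dotl (colm M i) (colm M j)"
  by (simp add: cgram_def)

lemma good_rows:
  assumes "good M" "i < 19" "j < 19"
  shows "(\<Sum>l<19. toW M i l * toW M j l) = (if i = j then 9 else 0)"
proof -
  have "dotl (M ! i) (M ! j) = (if i = j then 9 else 0)"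
    using assms gram_nth[of M i j] idm_nth[of i j] unfolding good_def by auto
  then show ?thesis using toW_dot[of M M i j] assms unfolding good_def by simp
qed

lemma good_cols:
  assumes "good M" "i < 19" "j < 19"
  shows "(\<Sum>l<19. toW M l i * toW M l j) = (if i = j then 9 else 0)"
proof -
  have "dotl (colm M i) (colm M j) = (if i = j then 9 else 0)"
    using assms cgram_nth[of i j M] idm_nth[of i j] unfolding good_def by auto
  then show ?thesis using toW_coldot[of M i j] assms unfolding good_def by simp
qed

lemma good_weighing:
  assumes "good M" shows "weighing_matrix 19 9 (toW M)"
  unfolding weighing_matrix_def
proof (intro conjI allI impI)
  fix i j :: nat
  assume "\<not> (i < 19 \<and> j < 19)" then show "toW M i j = 0" unfolding toW_def by auto
next
  fix i j :: nat assume ij: "i < 19" "j < 19"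
  have "M ! i ! j = 0 \<or> M ! i ! j = 1 \<or> M ! i ! j = -1"
    using assms ij row_len[of M i] unfolding good_def entries_ok_def wf_def by (auto simp: list_all_length)
  then show "toW M i j \<in> {1, -1, 0}" using ij by (auto simp: toW_def)
next
  fix i j :: nat assume ij: "i < 19" "j < 19"
  show "(\<Sum>l<19. toW M i l * toW M j l) = (if i = j then real 9 else 0)"
    using good_rows[OF assms ij] by simp
qed

lemma scaled_orth:
  fixes A B :: "nat \<Rightarrow> nat \<Rightarrow> real"
  assumes rowsA: "\<And>i j. i < 19 \<Longrightarrow> j < 19 \<Longrightarrow> (\<Sum>l<19. A i l * A j l) = (if i = j then 9 else 0)"
  and colsB: "\<And>a b. a < 19 \<Longrightarrow> b < 19 \<Longrightarrow> (\<Sum>l<19. B l a * B l b) = (if a = b then 9 else 0)"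
  and ij: "i < 19" "j < 19"
  shows "(\<Sum>l<19. scaled_prod 19 9 A B i l * scaled_prod 19 9 A B j l) = (if i = j then 9 else 0)"
proof -
  have "(\<Sum>l<19. scaled_prod 19 9 A B i l * scaled_prod 19 9 A B j l)
      = (\<Sum>l<19. (\<Sum>a<19. A i a * B l a) * (\<Sum>b<19. A j b * B l b)) / 9"
  proof -
    have "(\<Sum>l<19. scaled_prod 19 9 A B i l * scaled_prod 19 9 A B j l)
      = (\<Sum>l<19. (\<Sum>a<19. A i a * B l a) * (\<Sum>b<19. A j b * B l b) / 9)"
      using ij by (intro sum.cong refl) (simp add: scaled_prod_def sqrt9)
    then show ?thesis by (simp add: sum_divide_distrib)
  qed
  also have "(\<Sum>l<19::nat. (\<Sum>a<19. A i a * B l a) * (\<Sum>b<19. A j b * B l b))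
      = (\<Sum>a<19::nat. \<Sum>b<19::nat. A i a * A j b * (\<Sum>l<19. B l a * B l b))"
  proof -
    have "(\<Sum>l<19::nat. (\<Sum>a<19. A i a * B l a) * (\<Sum>b<19. A j b * B l b))
        = (\<Sum>l<19::nat. \<Sum>a<19::nat. \<Sum>b<19::nat. A i a * A j b * (B l a * B l b))"
      by (simp add: sum_product mult_ac)
    also have "\<dots> = (\<Sum>a<19::nat. \<Sum>l<19::nat. \<Sum>b<19::nat. A i a * A j b * (B l a * B l b))"
      by (rule sum.swap)
    also have "\<dots> = (\<Sum>a<19::nat. \<Sum>b<19::nat. \<Sum>l<19::nat. A i a * A j b * (B l a * B l b))"
      by (rule sum.cong[OF refl], rule sum.swap)
    also have "\<dots> = (\<Sum>a<19::nat. \<Sum>b<19::nat. A i a * A j b * (\<Sum>l<19. B l a * B l b))"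
      by (simp add: sum_distrib_left)
    finally show ?thesis .
  qed
  also have "\<dots> = (\<Sum>a<19::nat. \<Sum>b<19::nat. A i a * A j b * (if a = b then 9 else 0))"
    by (intro sum.cong refl) (simp add: colsB)
  also have "\<dots> = (\<Sum>a<19::nat. 9 * (A i a * A j a))"
    by (intro sum.cong refl) (simp add: if_distrib cong: if_cong)
  also have "\<dots> = 9 * (if i = j then 9 else 0)"
    by (simp add: sum_distrib_left[symmetric] rowsA ij)
  finally show ?thesis by simp
qed

lemma cross_unbiased:
  assumes gM: "good M" and gN: "good N" and c: "cross_ok M N"
  shows "unbiased 19 9 (toW M) (toW N)"
  unfolding unbiased_def
proof (intro conjI)
  show "weighing_matrix 19 9 (toW M)" "weighing_matrix 19 9 (toW N)" using gM gN by (simp_all add: good_weighing)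
  show "weighing_matrix 19 9 (scaled_prod 19 9 (toW M) (toW N))"
    unfolding weighing_matrix_def
  proof (intro conjI allI impI)
    fix i j :: nat
    assume "\<not> (i < 19 \<and> j < 19)" then show "scaled_prod 19 9 (toW M) (toW N) i j = 0" unfolding scaled_prod_def by auto
  next
    fix i j :: nat assume ij: "i < 19" "j < 19"
    have wM: "wf M" and wN: "wf N" using gM gN by (simp_all add: good_def)
    have "M ! i \<in> set M" "N ! j \<in> set N" using ij wM wN by (auto simp: wf_def)
    then have "dotl (M ! i) (N ! j) = 0 \<or> dotl (M ! i) (N ! j) = 3 \<or> dotl (M ! i) (N ! j) = -3"
      using c unfolding cross_ok_def list_all_iff by blast
    then show "scaled_prod 19 9 (toW M) (toW N) i j \<in> {1, -1, 0}"
      using ij toW_dot[OF wM wN ij] by (auto simp: scaled_prod_def sqrt9)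
  next
    fix i j :: nat assume ij: "i < 19" "j < 19"
    show "(\<Sum>l<19. scaled_prod 19 9 (toW M) (toW N) i l * scaled_prod 19 9 (toW M) (toW N) j l) = (if i = j then real 9 else 0)"
      using scaled_orth[of "toW M" "toW N" i j] good_rows[OF gM] good_cols[OF gN] ij by simp
  qed
qed

lemma dotl_comm: "dotl xs ys = dotl ys xs"
  by (induction xs ys rule: dotl.induct) (auto simp: mult.commute elim: dotl.elims)

lemma cross_ok_sym: "cross_ok M N \<Longrightarrow> cross_ok N M"
  unfolding cross_ok_def list_all_iff by (metis dotl_comm)


definition M1 :: "int list list" where
 "M1 = [[0,1,-1,0,1,0,1,0,0,-1,0,0,0,0,1,0,1,1,1],
  [0,0,1,1,0,1,0,1,-1,-1,0,0,-1,-1,0,1,0,0,0],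
  [0,1,0,0,-1,1,0,0,0,-1,-1,-1,1,0,-1,-1,0,0,0],
  [0,1,0,1,0,0,0,1,0,0,0,1,1,1,1,0,-1,0,-1],
  [1,0,0,-1,0,1,0,1,-1,1,1,0,0,0,0,-1,0,1,0],
  [1,0,1,0,1,0,1,0,0,0,0,-1,0,1,0,0,-1,-1,1],
  [0,1,1,0,1,0,0,-1,-1,1,-1,0,0,0,0,0,1,0,-1],
  [0,1,0,-1,0,-1,0,0,-1,-1,1,1,0,0,-1,0,0,-1,0],
  [0,0,0,0,0,1,1,0,1,0,1,0,0,1,-1,1,1,0,-1],
  [1,0,1,0,0,-1,0,0,1,-1,0,0,-1,0,0,-1,0,1,-1],
  [1,1,0,0,-1,0,-1,-1,0,0,1,-1,0,0,1,1,0,0,0],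
  [1,0,-1,-1,0,0,1,0,0,0,-1,0,0,-1,0,1,-1,0,-1],
  [1,1,0,1,0,0,0,0,1,1,0,1,0,-1,-1,0,0,0,1],
  [1,0,-1,0,0,0,-1,1,0,0,-1,0,-1,1,0,0,1,-1,0],
  [0,0,1,-1,0,0,0,1,1,0,0,0,1,-1,1,0,1,-1,0],
  [1,-1,0,1,-1,-1,1,0,-1,0,0,0,1,0,0,0,1,0,0],
  [0,0,0,0,1,-1,-1,1,0,0,0,-1,1,0,-1,1,0,1,0],
  [1,-1,0,0,1,1,-1,-1,0,-1,0,1,1,0,0,0,0,0,0],
  [0,0,1,-1,-1,0,0,0,0,0,-1,1,0,1,0,1,0,1,1]]"

lemma good_M1: "good M1"
  unfolding good_def wf_def entries_ok_def gram_def cgram_def colm_def idm_def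
  by (simp add: M1_def upt_rec)

definition M2 :: "int list list" where
 "M2 = [[1,0,0,0,-1,1,-1,0,-1,-1,0,0,0,0,0,0,-1,1,1],
  [1,1,0,-1,1,0,0,-1,1,-1,1,0,0,1,0,0,0,0,0],
  [1,-1,0,0,0,0,-1,-1,-1,0,0,-1,0,0,0,0,1,-1,-1],
  [1,0,1,1,0,-1,0,0,0,1,1,0,1,0,0,1,-1,0,0],
  [0,1,0,1,1,0,-1,0,0,0,0,0,-1,-1,-1,0,0,1,-1],
  [0,1,1,-1,0,0,0,0,-1,1,0,0,-1,0,0,-1,-1,-1,0],
  [1,0,0,1,0,-1,0,0,0,0,0,1,-1,0,1,-1,1,0,1],
  [1,0,-1,0,1,1,1,0,0,1,0,-1,0,-1,0,0,0,0,1],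
  [0,1,0,0,0,-1,1,-1,-1,-1,-1,0,1,-1,0,0,0,0,0],
  [0,0,1,0,-1,0,1,0,0,0,1,-1,0,0,-1,-1,1,1,0],
  [0,1,0,0,0,0,-1,0,0,1,-1,0,1,1,-1,0,1,0,1],
  [1,1,0,0,-1,0,0,1,1,0,-1,-1,0,0,1,0,0,0,-1],
  [1,-1,1,-1,0,0,0,0,1,0,-1,1,0,-1,-1,0,0,0,0],
  [0,0,1,1,1,1,0,1,0,-1,0,0,1,0,0,-1,0,-1,0],
  [0,1,0,0,-1,1,0,0,0,0,1,1,0,-1,0,1,1,-1,0],
  [0,0,1,1,0,1,1,-1,0,0,-1,0,-1,1,0,1,0,0,0],
  [1,0,-1,0,0,0,1,1,-1,0,0,1,0,1,-1,0,0,0,-1],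
  [0,0,0,0,0,1,0,-1,0,1,0,1,1,0,1,-1,0,1,-1],
  [0,0,1,-1,1,0,0,1,-1,0,0,0,0,0,1,1,1,1,0]]"

lemma good_M2: "good M2"
  unfolding good_def wf_def entries_ok_def gram_def cgram_def colm_def idm_def
  by (simp add: M2_def upt_rec)

definition M3 :: "int list list" where
 "M3 = [[0,1,-1,1,0,-1,0,-1,0,0,0,-1,-1,-1,0,0,0,0,1],
  [1,0,0,0,0,0,1,0,-1,-1,-1,0,-1,0,1,0,1,0,-1],
  [0,1,0,-1,0,0,0,1,-1,1,-1,-1,1,-1,0,0,0,0,0],
  [0,0,1,-1,-1,0,0,0,0,1,1,0,-1,0,1,0,1,0,1],
  [1,0,0,0,0,-1,0,0,1,1,-1,1,0,0,1,0,-1,1,0],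
  [0,1,1,0,0,0,-1,0,0,-1,0,-1,0,1,1,-1,-1,0,0],
  [1,0,0,0,0,-1,0,0,1,0,0,-1,1,1,0,1,1,-1,0],
  [0,1,1,1,0,0,1,1,1,0,1,0,0,-1,0,0,0,0,-1],
  [1,1,0,0,0,1,1,-1,0,1,0,0,0,1,-1,-1,0,0,0],
  [0,0,1,-1,1,-1,1,0,0,-1,0,0,0,0,-1,0,0,1,1],
  [1,0,0,1,1,1,-1,1,0,0,0,0,0,0,0,0,1,1,1],
  [0,1,0,0,1,0,0,-1,-1,0,1,1,1,0,1,1,0,0,0],
  [1,0,-1,-1,1,0,0,1,0,0,1,0,-1,0,0,0,-1,-1,0],
  [0,1,-1,-1,-1,1,0,0,1,-1,0,0,0,0,0,1,0,1,0],
  [1,-1,1,0,0,1,0,-1,0,0,0,-1,0,-1,0,1,-1,0,0],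
  [1,0,0,0,-1,-1,-1,0,-1,0,1,0,0,0,-1,0,0,1,-1],
  [1,0,0,0,-1,0,0,0,0,-1,0,1,1,-1,0,-1,0,-1,1],
  [0,1,1,0,0,0,-1,0,0,0,-1,1,-1,0,-1,1,0,-1,0],
  [0,0,0,1,-1,0,1,1,-1,0,0,0,0,1,0,1,-1,0,1]]"

lemma good_M3: "good M3"
  unfolding good_def wf_def entries_ok_def gram_def cgram_def colm_def idm_def
  by (simp add: M3_def upt_rec)

definition M4 :: "int list list" where
 "M4 = [[0,1,0,0,0,0,1,0,-1,0,1,-1,0,-1,0,1,-1,-1,0],
  [1,1,0,0,1,-1,0,1,0,0,0,1,0,1,0,1,0,0,1],
  [1,0,-1,1,0,1,0,1,0,0,0,-1,0,1,0,-1,-1,0,0],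
  [1,0,0,0,1,0,0,-1,-1,0,1,1,-1,0,0,-1,0,0,-1],
  [0,0,0,0,1,1,0,1,1,0,0,0,-1,-1,-1,0,1,-1,0],
  [1,0,-1,-1,0,0,-1,-1,1,0,0,0,0,-1,0,0,-1,0,1],
  [0,0,1,1,0,0,-1,0,1,0,0,0,-1,0,1,1,-1,0,-1],
  [0,1,1,-1,-1,1,-1,0,0,0,1,0,0,1,-1,0,0,0,0],
  [1,0,1,-1,1,0,0,0,0,-1,-1,-1,1,0,0,0,0,0,-1],
  [0,1,0,1,0,1,-1,0,-1,0,-1,1,1,-1,0,0,0,0,0],
  [1,-1,1,0,-1,0,0,0,-1,0,-1,0,-1,0,0,0,0,-1,1],
  [0,1,-1,0,-1,-1,0,0,0,-1,-1,0,-1,0,-1,0,0,0,-1],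
  [1,0,0,0,-1,0,1,0,1,1,0,1,1,0,0,0,0,-1,-1],
  [0,0,1,0,0,-1,0,1,0,1,0,0,0,-1,-1,-1,-1,1,0],
  [0,1,1,1,0,0,1,-1,1,-1,0,0,0,0,0,-1,0,0,1],
  [1,0,0,1,0,0,0,-1,0,1,0,-1,0,0,-1,1,1,1,0],
  [0,1,0,-1,0,1,1,0,0,1,-1,0,-1,0,1,0,0,1,0],
  [0,1,0,0,0,-1,-1,0,0,1,0,-1,0,0,1,-1,1,-1,0],
  [1,0,0,0,-1,0,0,1,0,-1,1,0,0,-1,1,0,1,1,0]]"

lemma good_M4: "good M4"
  unfolding good_def wf_def entries_ok_def gram_def cgram_def colm_def idm_def
  by (simp add: M4_def upt_rec)

definition M5 :: "int list list" where
 "M5 = [[0,1,-1,0,0,1,-1,0,0,-1,1,0,1,0,0,0,-1,-1,0],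
  [1,0,0,0,-1,1,1,0,1,0,0,0,0,-1,0,-1,-1,1,0],
  [1,0,0,1,-1,1,0,0,-1,0,1,0,-1,1,0,0,1,0,0],
  [1,0,1,0,0,0,0,-1,1,0,0,1,0,0,1,1,0,-1,1],
  [0,0,1,0,-1,0,0,0,-1,0,-1,0,1,0,1,-1,0,-1,-1],
  [0,1,1,1,1,0,1,0,-1,0,0,1,0,0,-1,0,-1,0,0],
  [1,-1,1,0,1,0,-1,1,0,0,1,0,0,-1,0,0,0,0,-1],
  [1,0,0,-1,0,-1,0,-1,-1,-1,0,-1,-1,0,0,0,-1,0,0],
  [0,0,0,1,0,0,0,0,-1,0,0,-1,1,-1,1,1,0,1,1],
  [0,0,0,1,1,0,1,0,1,-1,0,-1,0,1,1,0,0,0,-1],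
  [0,0,0,0,0,1,0,1,0,1,-1,-1,-1,0,0,1,-1,-1,0],
  [0,1,1,1,-1,-1,-1,0,1,0,0,-1,0,0,-1,0,0,0,0],
  [0,0,0,0,0,1,0,-1,0,-1,-1,0,0,-1,-1,1,1,0,-1],
  [0,1,0,0,0,0,-1,1,0,-1,-1,1,-1,0,1,0,0,1,0],
  [1,-1,0,0,0,0,0,1,0,-1,-1,0,1,1,-1,0,0,0,1],
  [1,1,0,-1,0,0,0,0,0,1,0,0,1,1,0,1,0,1,-1],
  [0,1,1,-1,1,1,0,0,0,0,0,-1,0,0,0,-1,1,0,1],
  [1,1,-1,0,0,-1,1,1,0,0,0,0,0,-1,0,0,1,-1,0],
  [1,0,-1,1,1,0,-1,-1,0,1,-1,0,0,0,0,-1,0,0,0]]"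

lemma good_M5: "good M5"
  unfolding good_def wf_def entries_ok_def gram_def cgram_def colm_def idm_def
  by (simp add: M5_def upt_rec)

definition M6 :: "int list list" where
 "M6 = [[0,1,0,0,0,1,0,0,1,1,0,0,1,-1,1,1,-1,0,0],
  [0,0,1,0,-1,1,1,1,0,1,0,1,-1,0,-1,0,0,0,0],
  [0,0,1,1,0,0,0,0,-1,0,-1,-1,1,0,-1,1,0,-1,0],
  [1,-1,1,1,0,0,-1,0,1,0,0,0,0,0,0,-1,-1,0,1],
  [0,0,0,0,1,-1,-1,1,0,1,-1,1,0,-1,0,0,1,0,0],
  [0,0,1,0,0,1,-1,-1,-1,0,1,0,0,-1,0,0,1,1,0],
  [1,-1,-1,0,0,1,0,1,0,0,1,0,1,0,0,0,1,-1,0],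
  [1,1,0,-1,0,-1,0,0,0,1,1,-1,0,0,-1,0,0,0,1],
  [0,1,1,0,0,0,0,1,1,-1,0,0,1,1,0,0,1,1,0],
  [1,0,0,1,1,0,1,0,-1,1,0,0,0,1,1,0,0,1,0],
  [1,1,0,0,0,0,0,1,-1,-1,0,0,0,-1,0,-1,-1,0,-1],
  [0,1,0,0,-1,0,-1,0,-1,0,0,1,0,1,1,0,0,-1,1],
  [1,1,0,1,0,0,0,-1,1,0,0,0,-1,0,0,0,1,-1,-1],
  [1,0,0,-1,1,1,0,0,0,-1,-1,0,-1,0,0,1,0,0,1],
  [0,0,0,1,0,-1,1,0,0,-1,1,1,0,-1,0,1,0,0,1],
  [0,0,1,-1,1,0,1,-1,0,0,0,1,1,0,0,-1,0,-1,0],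
  [1,-1,1,-1,-1,-1,0,0,0,0,0,0,0,0,1,1,0,0,-1],
  [1,0,-1,0,-1,0,0,-1,0,0,-1,1,1,0,-1,0,0,1,0],
  [0,0,0,0,1,0,-1,0,0,0,1,1,0,1,-1,1,-1,0,-1]]"

lemma good_M6: "good M6"
  unfolding good_def wf_def entries_ok_def gram_def cgram_def colm_def idm_def
  by (simp add: M6_def upt_rec)

lemma cross_1_2: "cross_ok M1 M2"
  unfolding cross_ok_def by (simp add: M1_def M2_def)

lemma cross_2_1: "cross_ok M2 M1"
  by (rule cross_ok_sym[OF cross_1_2])

lemma cross_1_3: "cross_ok M1 M3"
  unfolding cross_ok_def by (simp add: M1_def M3_def)

lemma cross_3_1: "cross_ok M3 M1"
  by (rule cross_ok_sym[OF cross_1_3])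

lemma cross_1_4: "cross_ok M1 M4"
  unfolding cross_ok_def by (simp add: M1_def M4_def)

lemma cross_4_1: "cross_ok M4 M1"
  by (rule cross_ok_sym[OF cross_1_4])

lemma cross_1_5: "cross_ok M1 M5"
  unfolding cross_ok_def by (simp add: M1_def M5_def)

lemma cross_5_1: "cross_ok M5 M1"
  by (rule cross_ok_sym[OF cross_1_5])

lemma cross_1_6: "cross_ok M1 M6"
  unfolding cross_ok_def by (simp add: M1_def M6_def)

lemma cross_6_1: "cross_ok M6 M1"
  by (rule cross_ok_sym[OF cross_1_6])

lemma cross_2_3: "cross_ok M2 M3"
  unfolding cross_ok_def by (simp add: M2_def M3_def)

lemma cross_3_2: "cross_ok M3 M2"
  by (rule cross_ok_sym[OF cross_2_3])

lemma cross_2_4: "cross_ok M2 M4"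
  unfolding cross_ok_def by (simp add: M2_def M4_def)

lemma cross_4_2: "cross_ok M4 M2"
  by (rule cross_ok_sym[OF cross_2_4])

lemma cross_2_5: "cross_ok M2 M5"
  unfolding cross_ok_def by (simp add: M2_def M5_def)

lemma cross_5_2: "cross_ok M5 M2"
  by (rule cross_ok_sym[OF cross_2_5])

lemma cross_2_6: "cross_ok M2 M6"
  unfolding cross_ok_def by (simp add: M2_def M6_def)

lemma cross_6_2: "cross_ok M6 M2"
  by (rule cross_ok_sym[OF cross_2_6])

lemma cross_3_4: "cross_ok M3 M4"
  unfolding cross_ok_def by (simp add: M3_def M4_def)

lemma cross_4_3: "cross_ok M4 M3"
  by (rule cross_ok_sym[OF cross_3_4])

lemma cross_3_5: "cross_ok M3 M5"
  unfolding cross_ok_def by (simp add: M3_def M5_def)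

lemma cross_5_3: "cross_ok M5 M3"
  by (rule cross_ok_sym[OF cross_3_5])

lemma cross_3_6: "cross_ok M3 M6"
  unfolding cross_ok_def by (simp add: M3_def M6_def)

lemma cross_6_3: "cross_ok M6 M3"
  by (rule cross_ok_sym[OF cross_3_6])

lemma cross_4_5: "cross_ok M4 M5"
  unfolding cross_ok_def by (simp add: M4_def M5_def)

lemma cross_5_4: "cross_ok M5 M4"
  by (rule cross_ok_sym[OF cross_4_5])

lemma cross_4_6: "cross_ok M4 M6"
  unfolding cross_ok_def by (simp add: M4_def M6_def)

lemma cross_6_4: "cross_ok M6 M4"
  by (rule cross_ok_sym[OF cross_4_6])

lemma cross_5_6: "cross_ok M5 M6"
  unfolding cross_ok_def by (simp add: M5_def M6_def)

lemma cross_6_5: "cross_ok M6 M5"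
  by (rule cross_ok_sym[OF cross_5_6])

lemma neq_1_2: "toW M1 \<noteq> toW M2"
proof
  assume "toW M1 = toW M2"
  then have "toW M1 0 0 = toW M2 0 0" by simp
  then show False by (simp add: toW_def M1_def M2_def)
qed

lemma neq_1_3: "toW M1 \<noteq> toW M3"
proof
  assume "toW M1 = toW M3"
  then have "toW M1 0 3 = toW M3 0 3" by simp
  then show False by (simp add: toW_def M1_def M3_def)
qed

lemma neq_1_4: "toW M1 \<noteq> toW M4"
proof
  assume "toW M1 = toW M4"
  then have "toW M1 0 2 = toW M4 0 2" by simp
  then show False by (simp add: toW_def M1_def M4_def)
qed

lemma neq_1_5: "toW M1 \<noteq> toW M5"
proof
  assume "toW M1 = toW M5"
  then have "toW M1 0 4 = toW M5 0 4" by simp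
  then show False by (simp add: toW_def M1_def M5_def)
qed

lemma neq_1_6: "toW M1 \<noteq> toW M6"
proof
  assume "toW M1 = toW M6"
  then have "toW M1 0 2 = toW M6 0 2" by simp
  then show False by (simp add: toW_def M1_def M6_def)
qed

lemma neq_2_3: "toW M2 \<noteq> toW M3"
proof
  assume "toW M2 = toW M3"
  then have "toW M2 0 0 = toW M3 0 0" by simp
  then show False by (simp add: toW_def M2_def M3_def)
qed

lemma neq_2_4: "toW M2 \<noteq> toW M4"
proof
  assume "toW M2 = toW M4"
  then have "toW M2 0 0 = toW M4 0 0" by simp
  then show False by (simp add: toW_def M2_def M4_def)
qed

lemma neq_2_5: "toW M2 \<noteq> toW M5"
proof
  assume "toW M2 = toW M5"
  then have "toW M2 0 0 = toW M5 0 0" by simp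
  then show False by (simp add: toW_def M2_def M5_def)
qed

lemma neq_2_6: "toW M2 \<noteq> toW M6"
proof
  assume "toW M2 = toW M6"
  then have "toW M2 0 0 = toW M6 0 0" by simp
  then show False by (simp add: toW_def M2_def M6_def)
qed

lemma neq_3_4: "toW M3 \<noteq> toW M4"
proof
  assume "toW M3 = toW M4"
  then have "toW M3 0 2 = toW M4 0 2" by simp
  then show False by (simp add: toW_def M3_def M4_def)
qed

lemma neq_3_5: "toW M3 \<noteq> toW M5"
proof
  assume "toW M3 = toW M5"
  then have "toW M3 0 3 = toW M5 0 3" by simp
  then show False by (simp add: toW_def M3_def M5_def)
qed

lemma neq_3_6: "toW M3 \<noteq> toW M6"
proof
  assume "toW M3 = toW M6"
  then have "toW M3 0 2 = toW M6 0 2" by simp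
  then show False by (simp add: toW_def M3_def M6_def)
qed

lemma neq_4_5: "toW M4 \<noteq> toW M5"
proof
  assume "toW M4 = toW M5"
  then have "toW M4 0 2 = toW M5 0 2" by simp
  then show False by (simp add: toW_def M4_def M5_def)
qed

lemma neq_4_6: "toW M4 \<noteq> toW M6"
proof
  assume "toW M4 = toW M6"
  then have "toW M4 0 5 = toW M6 0 5" by simp
  then show False by (simp add: toW_def M4_def M6_def)
qed

lemma neq_5_6: "toW M5 \<noteq> toW M6"
proof
  assume "toW M5 = toW M6"
  then have "toW M5 0 2 = toW M6 0 2" by simp
  then show False by (simp add: toW_def M5_def M6_def)
qed

lemma six_mu: "mutually_unbiased 19 9 {toW M1, toW M2, toW M3, toW M4, toW M5, toW M6}"
  unfolding mutually_unbiased_def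
proof (intro conjI)
  show "\<forall>W\<in>{toW M1, toW M2, toW M3, toW M4, toW M5, toW M6}. weighing_matrix 19 9 W"
    by (simp add: good_weighing good_M1 good_M2 good_M3 good_M4 good_M5 good_M6)
  have u: "\<And>A B. good A \<Longrightarrow> good B \<Longrightarrow> cross_ok A B \<Longrightarrow> unbiased 19 9 (toW A) (toW B)"
    by (rule cross_unbiased)
  note g = good_M1 good_M2 good_M3 good_M4 good_M5 good_M6
  note c = cross_1_2 cross_1_3 cross_1_4 cross_1_5 cross_1_6 cross_2_3 cross_2_4 cross_2_5 cross_2_6
     cross_3_4 cross_3_5 cross_3_6 cross_4_5 cross_4_6 cross_5_6
     cross_2_1 cross_3_1 cross_4_1 cross_5_1 cross_6_1 cross_3_2 cross_4_2 cross_5_2 cross_6_2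
     cross_4_3 cross_5_3 cross_6_3 cross_5_4 cross_6_4 cross_6_5
  show "\<forall>W1\<in>{toW M1, toW M2, toW M3, toW M4, toW M5, toW M6}. \<forall>W2\<in>{toW M1, toW M2, toW M3, toW M4, toW M5, toW M6}.
          W1 \<noteq> W2 \<longrightarrow> unbiased 19 9 W1 W2"
    using u[OF _ _ c(1)] by (simp add: u g c)
qed

lemma six_card: "card {toW M1, toW M2, toW M3, toW M4, toW M5, toW M6} = 6"
  using neq_1_2 neq_1_3 neq_1_4 neq_1_5 neq_1_6 neq_2_3 neq_2_4 neq_2_5 neq_2_6
     neq_3_4 neq_3_5 neq_3_6 neq_4_5 neq_4_6 neq_5_6
  by (simp add: eq_commute)

theorem proposition6p8:
  shows "W_max 19 9 \<in> {6..27}"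
proof -
  define X where "X = {card S |S. finite S \<and> mutually_unbiased 19 9 S}"
  have bnd: "\<forall>y\<in>X. y \<le> 27" unfolding X_def using card_le_27 by auto
  have six: "6 \<in> X" unfolding X_def using six_mu six_card
    by (metis (mono_tags, lifting) finite.emptyI finite.insertI mem_Collect_eq)
  have "6 \<le> Sup X"
    by (rule cSup_upper[OF six]) (use bnd in \<open>auto simp: bdd_above_def\<close>)
  moreover have "Sup X \<le> 27"
    by (rule cSup_least) (use six bnd in auto)
  ultimately show ?thesis unfolding W_max_def X_def[symmetric] by simp
qed

end
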